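(* Let $d\ge1$, $p>1$, let $\{1,\dots,d\}$ be partitioned into $\mathcal{D}$ (desirable) and $\mathcal{U}$ (undesirable), let $c\in\mathbb{R}^d$ with $c_f>0$, let $\mathbb{C}\in\mathbb{R}^{d\times d}$ be the contribution matrix of a causal graph and $h_0\in\mathbb{R}^d$ with $\mathbb{C}h_0\ge0$ componentwise, let $\alpha\in\mathbb{R}$ and $\beta\in(0,1)$. Consider the agent's problem $$\min_{e\in\mathbb{R}^d,\ e\ge0}\ \Big(\sum_{f} c_f e_f^{\,p}\Big)^{1/p}\quad\text{s.t.}\quad(\mathbb{C}h_0)^\top e\ge\alpha .$$ If $$\Big[\sum_{f\in\mathcal{D}}\Big(\frac{(\mathbb{C}h_0)_f}{c_f}\Big)^{2/(p-1)}\Big]^{1/2}\ \ge\ \frac{\beta}{\sqrt{1-\beta^2}}\Big[\sum_{f\in\mathcal{U}}\Big(\frac{(\mathbb{C}h_0)_f}{c_f}\Big)^{2/(p-1)}\Big]^{1/2},$$ then every optimal solution (best response) of this problem is a $\beta$-desirable effort profile.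
   Context: A causal graph is a weighted directed acyclic graph on $\{1,\dots,d\}$ with adjacency matrix $A$ ($A_{ij}$ the weight of edge $i\to j$, $0$ if absent); its contribution matrix is $\mathbb{C}=\sum_{k=0}^{d}A^k$. An effort profile $e$ is $\beta$-desirable if $\|e_{\mathcal{D}}\|_2\ge\beta\|e\|_2$, where $e_{\mathcal{D}}$ is the restriction of $e$ to the coordinates in $\mathcal{D}$. *)

theory Defs
  imports "HOL-Analysis.Analysis"
begin

text \<open>Nodes {1..d} are represented by a finite type 'n (so d = CARD('n) \<ge> 1).\<close>

primrec matpow :: "real^'n^'n \<Rightarrow> nat \<Rightarrow> real^'n^'n" where
  "matpow A 0 = mat 1"
| "matpow A (Suc k) = matpow A k ** A"

definition causal_graph :: "real^'n^'n \<Rightarrow> bool" where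
  "causal_graph A \<longleftrightarrow> acyclic {(i, j). A $ i $ j \<noteq> 0}"

definition contribution_matrix :: "real^'n::finite^'n \<Rightarrow> real^'n^'n" where
  "contribution_matrix A = (\<Sum>k\<in>{0..CARD('n)}. matpow A k)"

definition restrict_vec :: "'n set \<Rightarrow> real^'n \<Rightarrow> real^'n" where
  "restrict_vec S e = (\<chi> i. if i \<in> S then e $ i else 0)"

definition beta_desirable :: "'n set \<Rightarrow> real \<Rightarrow> real^'n \<Rightarrow> bool" where
  "beta_desirable D \<beta> e \<longleftrightarrow> norm (restrict_vec D e) \<ge> \<beta> * norm e"

definition agent_cost :: "real \<Rightarrow> real^'n::finite \<Rightarrow> real^'n \<Rightarrow> real" where
  "agent_cost p c e = (\<Sum>f\<in>UNIV. c $ f * (e $ f) powr p) powr (1 / p)"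

definition agent_feasible :: "real^'n::finite \<Rightarrow> real \<Rightarrow> real^'n \<Rightarrow> bool" where
  "agent_feasible w \<alpha> e \<longleftrightarrow> (\<forall>f. e $ f \<ge> 0) \<and> w \<bullet> e \<ge> \<alpha>"

definition best_response :: "real \<Rightarrow> real^'n::finite \<Rightarrow> real^'n \<Rightarrow> real \<Rightarrow> real^'n \<Rightarrow> bool" where
  "best_response p c w \<alpha> e \<longleftrightarrow> agent_feasible w \<alpha> e \<and>
     (\<forall>e'. agent_feasible w \<alpha> e' \<longrightarrow> agent_cost p c e \<le> agent_cost p c e')"

end

theory Submission
  imports Defs
begin

lemma mvt_pow:
  fixes x y p :: real
  assumes "0 < x" "x < y" "p > 1"
  shows "\<exists>z. x < z \<and> z < y \<and> y powr p - x powr p = (y - x) * (p * z powr (p - 1))"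
proof -
  have "\<And>t. x \<le> t \<Longrightarrow> t \<le> y \<Longrightarrow> ((\<lambda>z. z powr p) has_real_derivative p * t powr (p - 1)) (at t)"
    using assms by (intro has_real_derivative_powr) auto
  from MVT2[OF assms(2) this] show ?thesis by blast
qed

lemma tangent_strict:
  fixes a b p :: real
  assumes "0 \<le> a" "0 \<le> b" "a \<noteq> b" "p > 1"
  shows "b powr p > a powr p + p * a powr (p - 1) * (b - a)"
proof (cases "a = 0")
  case True
  then show ?thesis using assms by simp
next
  case a: False
  show ?thesis
  proof (cases "b = 0")
    case True
    have "a powr (p - 1) * a = a powr p" using powr_add[of a "p - 1" 1] assms a by simp
    then have "p * a powr (p - 1) * (b - a) = - p * a powr p" using True by (simp add: algebra_simps)
    moreover have "a powr p > 0" using a assms by simp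
    ultimately show ?thesis using True assms by (simp add: algebra_simps)
  next
    case b: False
    show ?thesis
    proof (cases "a < b")
      case True
      obtain z where z: "a < z" "z < b" "b powr p - a powr p = (b - a) * (p * z powr (p - 1))"
        using mvt_pow[of a b p] True a assms by auto
      have "a powr (p - 1) < z powr (p - 1)" using z assms by (intro powr_less_mono2) auto
      then have "p * a powr (p - 1) * (b - a) < p * z powr (p - 1) * (b - a)"
        using True assms by simp
      then show ?thesis using z by (simp add: algebra_simps)
    next
      case False
      then have ba: "b < a" using assms by simp
      obtain z where z: "b < z" "z < a" "a powr p - b powr p = (a - b) * (p * z powr (p - 1))"
        using mvt_pow[of b a p] ba b assms by auto
      have "z powr (p - 1) < a powr (p - 1)" using z assms by (intro powr_less_mono2) auto
      then have "p * z powr (p - 1) * (a - b) < p * a powr (p - 1) * (a - b)"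
        using ba assms by simp
      then show ?thesis using z by (simp add: algebra_simps)
    qed
  qed
qed


lemma norm2_vec: "(norm (x::real^'n))\<^sup>2 = (\<Sum>i\<in>UNIV. (x$i)\<^sup>2)"
  unfolding power2_norm_eq_inner inner_vec_def by (simp add: power2_eq_square)

theorem theorem2:
  fixes A :: "real^'n::finite^'n" and c h0 e :: "real^'n"
    and D U :: "'n set" and p \<alpha> \<beta> :: real
  assumes "p > 1"
    and "D \<inter> U = {}" and "D \<union> U = UNIV"
    and "\<And>f. c $ f > 0"
    and "causal_graph A"
    and "\<And>f. (contribution_matrix A *v h0) $ f \<ge> 0"
    and "0 < \<beta>" and "\<beta> < 1"
    and "sqrt (\<Sum>f\<in>D. ((contribution_matrix A *v h0) $ f / c $ f) powr (2 / (p - 1)))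
         \<ge> \<beta> / sqrt (1 - \<beta>\<^sup>2) *
           sqrt (\<Sum>f\<in>U. ((contribution_matrix A *v h0) $ f / c $ f) powr (2 / (p - 1)))"
    and "best_response p c (contribution_matrix A *v h0) \<alpha> e"
  shows "beta_desirable D \<beta> e"
proof -
  define w where "w = contribution_matrix A *v h0"
  have p: "p > 1" by fact
  have c: "\<And>f. c $ f > 0" by fact
  have w0: "\<And>f. w $ f \<ge> 0" using assms(6) w_def by simp
  have br: "best_response p c w \<alpha> e" using assms(10) w_def by simp
  have cond: "sqrt (\<Sum>f\<in>D. (w $ f / c $ f) powr (2 / (p - 1)))
         \<ge> \<beta> / sqrt (1 - \<beta>\<^sup>2) * sqrt (\<Sum>f\<in>U. (w $ f / c $ f) powr (2 / (p - 1)))"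
    using assms(9) w_def by simp
  have efeas: "\<forall>f. e $ f \<ge> 0" "w \<bullet> e \<ge> \<alpha>" using br by (auto simp: best_response_def agent_feasible_def)
  define S where "S x = (\<Sum>f\<in>UNIV. c $ f * (x $ f) powr p)" for x :: "real^'n"
  have S0: "S x \<ge> 0" for x unfolding S_def using c by (intro sum_nonneg) (simp add: less_imp_le)
  have Sle: "S e \<le> S x" if "agent_feasible w \<alpha> x" for x
  proof (rule ccontr)
    assume "\<not> S e \<le> S x"
    then have "S x powr (1/p) < S e powr (1/p)" using S0 p by (intro powr_less_mono2) auto
    moreover have "agent_cost p c e \<le> agent_cost p c x" using br that by (auto simp: best_response_def)
    ultimately show False by (simp add: agent_cost_def S_def)
  qed
  define r where "r f = w $ f / c $ f" for f
  define u where "u f = r f powr (1 / (p - 1))" for f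
  have r0: "r f \<ge> 0" for f using w0 c unfolding r_def by (simp add: less_imp_le)
  have u0: "u f \<ge> 0" for f unfolding u_def by simp
  have ur: "u f powr (p - 1) = r f" for f
    using p r0[of f] unfolding u_def by (simp add: powr_powr)
  have u2: "(u f)\<^sup>2 = r f powr (2 / (p - 1))" for f
  proof (cases "r f = 0")
    case True then show ?thesis by (simp add: u_def)
  next
    case False then show ?thesis unfolding u_def by (simp add: powr_power)
  qed
  have wr: "w $ f = c $ f * r f" for f using c[of f] unfolding r_def by simp
  have wu: "w $ f * u f = c $ f * u f powr p" for f
  proof (cases "u f = 0")
    case True then show ?thesis by simp
  next
    case False
    then have "u f powr (p - 1) * u f = u f powr p" using powr_add[of "u f" "p - 1" 1] u0[of f] by simp
    then show ?thesis using wr ur by (metis mult.assoc)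
  qed
  show ?thesis
  proof (cases "\<alpha> \<le> 0")
    case True
    have "agent_feasible w \<alpha> 0" using True by (simp add: agent_feasible_def)
    then have "S e \<le> S 0" by (rule Sle)
    also have "S 0 = 0" using p by (simp add: S_def)
    finally have Se: "S e = 0" using S0[of e] by simp
    have "e $ f = 0" for f
    proof -
      have "c $ f * (e $ f) powr p = 0"
        using Se unfolding S_def
        by (subst (asm) sum_nonneg_eq_0_iff) (auto intro!: mult_nonneg_nonneg less_imp_le[OF c])
      then show ?thesis using c[of f] by simp
    qed
    then have "e = 0" by (simp add: vec_eq_iff)
    then show ?thesis by (simp add: beta_desirable_def restrict_vec_def)
  next
    case False
    then have apos: "\<alpha> > 0" by simp
    define M where "M = (\<Sum>f\<in>UNIV. c $ f * u f powr p)"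
    have M_eq: "M = (\<Sum>f\<in>UNIV. w $ f * u f)" unfolding M_def using wu by simp
    have "w \<bullet> e > 0" using efeas apos by simp
    then obtain g where "w $ g * e $ g > 0" unfolding inner_vec_def
      by (metis (no_types, lifting) inner_real_def less_le_not_le sum_nonpos linorder_not_le)
    then have "w $ g > 0" using efeas w0[of g] by (metis mult_eq_0_iff order_less_le zero_le_mult_iff)
    then have "r g > 0" using c[of g] by (simp add: r_def)
    then have "u g > 0" by (simp add: u_def)
    then have "c $ g * u g powr p > 0" using c[of g] by simp
    then have Mpos: "M > 0" unfolding M_def
      using c u0 by (intro sum_pos2[where i=g]) (auto intro!: mult_nonneg_nonneg less_imp_le[OF c])
    define t where "t = \<alpha> / M"
    have tpos: "t > 0" using apos Mpos by (simp add: t_def)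
    define es where "es = (\<chi> f. t * u f)"
    have es_f: "es $ f = t * u f" for f by (simp add: es_def)
    have wes: "w \<bullet> es = \<alpha>"
    proof -
      have "w \<bullet> es = (\<Sum>f\<in>UNIV. t * (w $ f * u f))" unfolding inner_vec_def es_f
        by (simp add: algebra_simps)
      also have "\<dots> = t * M" by (simp add: M_eq sum_distrib_left)
      finally show ?thesis using Mpos by (simp add: t_def)
    qed
    have esfeas: "agent_feasible w \<alpha> es" using wes tpos u0
      by (simp add: agent_feasible_def es_f)
    have Sles: "S e \<le> S es" using Sle esfeas .
    have eq: "e = es"
    proof (rule ccontr)
      assume "e \<noteq> es"
      then obtain g where g: "e $ g \<noteq> es $ g" by (auto simp: vec_eq_iff)
      have esp: "es $ f powr (p - 1) = t powr (p - 1) * r f" for f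
        using tpos u0[of f] by (simp add: es_f powr_mult ur)
      define T where "T f = c $ f * (es $ f powr p + p * es $ f powr (p - 1) * (e $ f - es $ f))" for f
      have Tle: "T f \<le> c $ f * e $ f powr p" for f
      proof (cases "e $ f = es $ f")
        case True then show ?thesis by (simp add: T_def)
      next
        case False
        then show ?thesis unfolding T_def using c[of f] efeas tangent_strict[of "es $ f" "e $ f" p] p tpos u0[of f]
          by (intro mult_left_mono) (auto simp: es_f)
      qed
      have Tlt: "T g < c $ g * e $ g powr p"
        unfolding T_def using c[of g] efeas tangent_strict[of "es $ g" "e $ g" p] p tpos u0[of g] g
        by (intro mult_strict_left_mono) (auto simp: es_f)
      have "sum T UNIV < S e" unfolding S_def
        using Tle Tlt by (intro sum_strict_mono_ex1) auto
      moreover have "sum T UNIV = S es + p * t powr (p - 1) * (w \<bullet> e - w \<bullet> es)"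
      proof -
        have "sum T UNIV = S es + p * t powr (p - 1) * (\<Sum>f\<in>UNIV. w $ f * (e $ f - es $ f))"
        proof -
          have "sum T UNIV = (\<Sum>f\<in>UNIV. c $ f * es $ f powr p + p * t powr (p - 1) * (w $ f * (e $ f - es $ f)))"
            unfolding T_def esp wr by (intro sum.cong) (auto simp: algebra_simps)
          also have "\<dots> = S es + p * t powr (p - 1) * (\<Sum>f\<in>UNIV. w $ f * (e $ f - es $ f))"
            unfolding S_def by (simp add: sum.distrib sum_distrib_left)
          finally show ?thesis .
        qed
        also have "(\<Sum>f\<in>UNIV. w $ f * (e $ f - es $ f)) = w \<bullet> e - w \<bullet> es"
          by (simp add: inner_vec_def algebra_simps sum_subtractf)
        finally show ?thesis .
      qed
      moreover have "p * t powr (p - 1) * (w \<bullet> e - w \<bullet> es) \<ge> 0"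
        using wes efeas p tpos by simp
      ultimately show False using Sles by linarith
    qed
    define SD where "SD = (\<Sum>f\<in>D. r f powr (2 / (p - 1)))"
    define SU where "SU = (\<Sum>f\<in>U. r f powr (2 / (p - 1)))"
    have SD0: "SD \<ge> 0" "SU \<ge> 0" unfolding SD_def SU_def by (auto intro: sum_nonneg)
    have b2: "1 - \<beta>\<^sup>2 > 0" using assms(7,8) by (simp add: power_less_one_iff abs_less_iff power2_eq_square)
      (smt (verit) mult_less_cancel_right2)
    have cond': "sqrt SD \<ge> \<beta> / sqrt (1 - \<beta>\<^sup>2) * sqrt SU" using cond unfolding SD_def SU_def r_def .
    have "(\<beta> / sqrt (1 - \<beta>\<^sup>2) * sqrt SU)\<^sup>2 \<le> (sqrt SD)\<^sup>2"
      using cond' assms(7) SD0 b2 by (intro power_mono) auto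
    then have "\<beta>\<^sup>2 / (1 - \<beta>\<^sup>2) * SU \<le> SD" using SD0 b2
      by (simp add: power_mult_distrib power_divide)
    then have "\<beta>\<^sup>2 * SU \<le> (1 - \<beta>\<^sup>2) * SD" using b2 by (simp add: field_simps)
    then have key: "\<beta>\<^sup>2 * (SD + SU) \<le> SD" by (simp add: algebra_simps)
    have ND: "(norm (restrict_vec D e))\<^sup>2 = t\<^sup>2 * SD"
    proof -
      have "(norm (restrict_vec D e))\<^sup>2 = (\<Sum>f\<in>UNIV. if f \<in> D then (e $ f)\<^sup>2 else 0)"
        unfolding norm2_vec restrict_vec_def by (intro sum.cong) auto
      also have "\<dots> = (\<Sum>f\<in>D. (e $ f)\<^sup>2)" by (simp add: sum.If_cases)
      also have "\<dots> = t\<^sup>2 * SD" unfolding SD_def eq es_f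
        by (simp add: sum_distrib_left power_mult_distrib u2)
      finally show ?thesis .
    qed
    have NE: "(norm e)\<^sup>2 = t\<^sup>2 * (SD + SU)"
    proof -
      have "(norm e)\<^sup>2 = (\<Sum>f\<in>D \<union> U. (e $ f)\<^sup>2)" unfolding norm2_vec using assms(3) by simp
      also have "\<dots> = (\<Sum>f\<in>D. (e $ f)\<^sup>2) + (\<Sum>f\<in>U. (e $ f)\<^sup>2)"
        using assms(2) by (intro sum.union_disjoint) auto
      also have "\<dots> = t\<^sup>2 * (SD + SU)" unfolding SD_def SU_def eq es_f
        by (simp add: sum_distrib_left power_mult_distrib u2 distrib_left)
      finally show ?thesis .
    qed
    have "(\<beta> * norm e)\<^sup>2 \<le> (norm (restrict_vec D e))\<^sup>2"
      unfolding ND power_mult_distrib NE using key tpos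
      by (metis mult.left_commute mult_left_mono zero_le_power2)
    then show ?thesis unfolding beta_desirable_def
      by (rule power2_le_imp_le) simp
  qed
qed
end
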